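(* Let $\Sigma$ be an oriented graph on $n$ vertices with skew adjacency matrix $S$ and walk-matrix $W=W(\Sigma)$ satisfying $\det W\neq0$, and let $P$ be a permutation matrix with $P^{\mathrm T}SP=S^{\mathrm T}=-S$. If $n$ is even, then $\mathrm{rank}(I-P)=\mathrm{rank}(I+P)=n/2$; if $n$ is odd, then $\mathrm{rank}(I-P)=(n-1)/2$ and $\mathrm{rank}(I+P)=(n+1)/2$, where ranks are over $\mathbb{Q}$. The same equalities hold for ranks over $\mathbb{F}_p$ for every odd prime $p$.
   Context: The skew adjacency matrix $S=(S_{ij})$ of an oriented graph on vertices $v_1,\dots,v_n$ has $S_{ij}=1$ if $(v_i,v_j)$ is a directed edge, $S_{ij}=-1$ if $(v_j,v_i)$ is a directed edge, and $S_{ij}=0$ otherwise. The walk-matrix is $W(\Sigma)=[e,Se,\ldots,S^{n-1}e]$ with $e$ the all-ones vector. *)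

theory Defs
  imports "Jordan_Normal_Form.DL_Rank" "Berlekamp_Zassenhaus.Finite_Field"
    "HOL-Combinatorics.Permutations"
begin

definition oriented_graph :: "nat \<Rightarrow> (nat \<Rightarrow> nat \<Rightarrow> bool) \<Rightarrow> bool" where
  "oriented_graph n E \<longleftrightarrow> (\<forall>i j. E i j \<longrightarrow> i < n \<and> j < n \<and> i \<noteq> j \<and> \<not> E j i)"

definition skew_adj :: "nat \<Rightarrow> (nat \<Rightarrow> nat \<Rightarrow> bool) \<Rightarrow> int mat" where
  "skew_adj n E = mat n n (\<lambda>(i,j). if E i j then 1 else if E j i then -1 else 0)"

definition walk_matrix :: "nat \<Rightarrow> int mat \<Rightarrow> int mat" where
  "walk_matrix n S = mat n n (\<lambda>(i,k). ((S ^\<^sub>m k) *\<^sub>v vec n (\<lambda>_. 1)) $ i)"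

definition perm_mat :: "nat \<Rightarrow> (nat \<Rightarrow> nat) \<Rightarrow> int mat" where
  "perm_mat n \<sigma> = mat n n (\<lambda>(i,j). if i = \<sigma> j then 1 else 0)"

definition is_perm_mat :: "nat \<Rightarrow> int mat \<Rightarrow> bool" where
  "is_perm_mat n P \<longleftrightarrow> (\<exists>\<sigma>. \<sigma> permutes {..<n} \<and> P = perm_mat n \<sigma>)"

definition mat_rank :: "'a::field mat \<Rightarrow> nat" where
  "mat_rank A = vec_space.rank (dim_row A) A"

end

theory Submission
  imports Defs
begin


lemma perm_mat_carrier[simp]: "perm_mat n a \<in> carrier_mat n n"
  unfolding perm_mat_def by simp

lemma perm_mat_dims[simp]: "dim_row (perm_mat n a) = n" "dim_col (perm_mat n a) = n"
  unfolding perm_mat_def by simp_all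

lemma perm_mat_mult:
  assumes "\<And>j. j < n \<Longrightarrow> b j < n"
  shows "perm_mat n a * perm_mat n b = perm_mat n (a \<circ> b)"
proof (rule eq_matI)
  fix i j assume ij: "i < dim_row (perm_mat n (a \<circ> b))" "j < dim_col (perm_mat n (a \<circ> b))"
  then have i: "i < n" and j: "j < n" unfolding perm_mat_def by auto
  have "(perm_mat n a * perm_mat n b) $$ (i, j)
      = (\<Sum>k\<in>{0..<n}. (if i = a k then 1 else 0) * (if k = b j then 1 else 0))"
    using i j unfolding perm_mat_def by (simp add: scalar_prod_def)
  also have "\<dots> = (\<Sum>k\<in>{0..<n}. if k = b j then (if i = a k then 1 else 0) else 0)"
    by (rule sum.cong) auto
  also have "\<dots> = (if i = a (b j) then 1 else 0)" using assms[OF j] by simp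
  finally show "(perm_mat n a * perm_mat n b) $$ (i, j) = perm_mat n (a \<circ> b) $$ (i, j)"
    using i j unfolding perm_mat_def by simp
qed (auto simp: perm_mat_def)

lemma perm_mat_id:
  assumes "\<And>j. j < n \<Longrightarrow> a j = j"
  shows "perm_mat n a = 1\<^sub>m n"
  using assms unfolding perm_mat_def by (auto intro!: eq_matI)

lemma perm_mat_transpose:
  assumes "\<sigma> permutes {..<n}"
  shows "transpose_mat (perm_mat n \<sigma>) = perm_mat n (Hilbert_Choice.inv \<sigma>)"
proof (rule eq_matI)
  fix i j assume "i < dim_row (perm_mat n (Hilbert_Choice.inv \<sigma>))" "j < dim_col (perm_mat n (Hilbert_Choice.inv \<sigma>))"
  then have ij: "i < n" "j < n" unfolding perm_mat_def by auto
  have e: "(j = \<sigma> i) = (i = Hilbert_Choice.inv \<sigma> j)" using permutes_inv_eq[OF assms, of j i] by auto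
  show "transpose_mat (perm_mat n \<sigma>) $$ (i, j) = perm_mat n (Hilbert_Choice.inv \<sigma>) $$ (i, j)"
    unfolding perm_mat_def using ij e by simp
qed (auto simp: perm_mat_def)

lemma perm_mat_ones:
  assumes "\<sigma> permutes {..<n}"
  shows "perm_mat n \<sigma> *\<^sub>v vec n (\<lambda>_. 1) = (vec n (\<lambda>_. 1) :: int vec)"
proof (rule eq_vecI)
  fix i assume "i < dim_vec (vec n (\<lambda>_. 1) :: int vec)"
  then have i: "i < n" by simp
  have iv: "Hilbert_Choice.inv \<sigma> i < n" using i permutes_in_image[OF permutes_inv[OF assms]] by auto
  have "(perm_mat n \<sigma> *\<^sub>v vec n (\<lambda>_. 1)) $ i = (\<Sum>k\<in>{0..<n}. (if i = \<sigma> k then 1 else 0 :: int))"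
    using i unfolding perm_mat_def by (simp add: scalar_prod_def)
  also have "\<dots> = (\<Sum>k\<in>{0..<n}. (if k = Hilbert_Choice.inv \<sigma> i then 1 else 0 :: int))"
    by (rule sum.cong, simp, metis permutes_inv_eq[OF assms])
  also have "\<dots> = 1" using iv by simp
  finally show "(perm_mat n \<sigma> *\<^sub>v vec n (\<lambda>_. 1)) $ i = (vec n (\<lambda>_. 1) :: int vec) $ i" using i by simp
qed (simp add: perm_mat_def)

lemma perm_inv_comp:
  assumes "\<sigma> permutes {..<n}"
  shows "perm_mat n \<sigma> * transpose_mat (perm_mat n \<sigma>) = 1\<^sub>m n"
    and "transpose_mat (perm_mat n \<sigma>) * perm_mat n \<sigma> = 1\<^sub>m n"
proof -
  have a: "\<And>j. j < n \<Longrightarrow> Hilbert_Choice.inv \<sigma> j < n" using permutes_in_image[OF permutes_inv[OF assms]] by auto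
  have b: "\<And>j. j < n \<Longrightarrow> \<sigma> j < n" using permutes_in_image[OF assms] by auto
  show "perm_mat n \<sigma> * transpose_mat (perm_mat n \<sigma>) = 1\<^sub>m n"
    unfolding perm_mat_transpose[OF assms] using perm_mat_mult[where b="Hilbert_Choice.inv \<sigma>" and a=\<sigma>, OF a] perm_mat_id[of n "\<sigma> \<circ> Hilbert_Choice.inv \<sigma>"]
    by (simp add: permutes_inverses(1)[OF assms])
  show "transpose_mat (perm_mat n \<sigma>) * perm_mat n \<sigma> = 1\<^sub>m n"
    unfolding perm_mat_transpose[OF assms] using perm_mat_mult[where a="Hilbert_Choice.inv \<sigma>" and b=\<sigma>, OF b] perm_mat_id[of n "Hilbert_Choice.inv \<sigma> \<circ> \<sigma>"]
    by (simp add: permutes_inverses(2)[OF assms])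
qed

lemma mult_mat_vec_smult_ring:
  assumes "A \<in> carrier_mat nr nc" "v \<in> carrier_vec nc"
  shows "A *\<^sub>v (c \<cdot>\<^sub>v v) = (c :: 'a :: comm_ring_1) \<cdot>\<^sub>v (A *\<^sub>v v)"
  using assms by (auto intro!: eq_vecI)

lemma pow_mat_Suc_left:
  assumes "S \<in> carrier_mat n n"
  shows "S ^\<^sub>m Suc k = S * S ^\<^sub>m k"
proof (induction k)
  case 0 then show ?case using assms by simp
next
  case (Suc k)
  have "S ^\<^sub>m Suc (Suc k) = (S * S ^\<^sub>m k) * S" using Suc by simp
  also have "\<dots> = S * (S ^\<^sub>m k * S)" using assms by (intro assoc_mult_mat[of _ n n _ n _ n]) auto
  finally show ?case by simp
qed

lemma neg_mat_vec:
  assumes "A \<in> carrier_mat n n" "u \<in> carrier_vec n"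
  shows "(- A) *\<^sub>v u = (-1 :: 'a :: comm_ring_1) \<cdot>\<^sub>v (A *\<^sub>v u)"
  using assms by (auto intro!: eq_vecI simp: scalar_prod_def sum_negf[symmetric])

lemma anti_comm:
  fixes S P :: "int mat"
  assumes S: "S \<in> carrier_mat n n" and perm: "\<sigma> permutes {..<n}" and P: "P = perm_mat n \<sigma>"
    and h1: "transpose_mat P * S * P = transpose_mat S" and h2: "transpose_mat S = - S"
  shows "S * P = - (P * S)"
proof -
  have Pc: "P \<in> carrier_mat n n" using P by simp
  have Ptc: "transpose_mat P \<in> carrier_mat n n" using Pc by simp
  have "S * P = (P * transpose_mat P) * S * P" using perm_inv_comp(1)[OF perm] P S Pc by simp
  also have "\<dots> = P * (transpose_mat P * S * P)" using Pc Ptc S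
    using assoc_mult_mat[OF Pc Ptc S] assoc_mult_mat[OF Pc mult_carrier_mat[OF Ptc S] Pc] by simp
  also have "\<dots> = P * (- S)" using h1 h2 by simp
  also have "\<dots> = - (P * S)" using Pc S by simp
  finally show ?thesis .
qed

lemma pow_anti:
  fixes S P :: "int mat"
  assumes S: "S \<in> carrier_mat n n" and Pc: "P \<in> carrier_mat n n" and ac: "S * P = - (P * S)"
    and v: "v \<in> carrier_vec n"
  shows "P *\<^sub>v (S ^\<^sub>m k *\<^sub>v v) = (-1) ^ k \<cdot>\<^sub>v (S ^\<^sub>m k *\<^sub>v (P *\<^sub>v v))"
proof (induction k)
  case 0
  then show ?case using S Pc v by simp
next
  case (Suc k)
  have Sk: "S ^\<^sub>m k \<in> carrier_mat n n" using S by simp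
  have PS: "P * S = - (S * P)" using ac by simp
  have u: "S ^\<^sub>m k *\<^sub>v v \<in> carrier_vec n" using Sk v by simp
  have w: "S ^\<^sub>m k *\<^sub>v (P *\<^sub>v v) \<in> carrier_vec n" using Sk v Pc by simp
  have "P *\<^sub>v (S ^\<^sub>m Suc k *\<^sub>v v) = P *\<^sub>v (S *\<^sub>v (S ^\<^sub>m k *\<^sub>v v))"
    using pow_mat_Suc_left[OF S] assoc_mult_mat_vec[OF S Sk v] by simp
  also have "\<dots> = (P * S) *\<^sub>v (S ^\<^sub>m k *\<^sub>v v)" using assoc_mult_mat_vec[OF Pc S u] by simp
  also have "\<dots> = (-1) \<cdot>\<^sub>v ((S * P) *\<^sub>v (S ^\<^sub>m k *\<^sub>v v))" unfolding PS
    using neg_mat_vec[OF _ u, of "S * P"] S Pc by simp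
  also have "\<dots> = (-1) \<cdot>\<^sub>v (S *\<^sub>v (P *\<^sub>v (S ^\<^sub>m k *\<^sub>v v)))" using assoc_mult_mat_vec[OF S Pc u] by simp
  also have "\<dots> = (-1) \<cdot>\<^sub>v (S *\<^sub>v ((-1) ^ k \<cdot>\<^sub>v (S ^\<^sub>m k *\<^sub>v (P *\<^sub>v v))))" using Suc by simp
  also have "\<dots> = (-1) ^ Suc k \<cdot>\<^sub>v (S *\<^sub>v (S ^\<^sub>m k *\<^sub>v (P *\<^sub>v v)))"
    using mult_mat_vec_smult_ring[OF S w] by (simp add: smult_smult_assoc)
  also have "\<dots> = (-1) ^ Suc k \<cdot>\<^sub>v (S ^\<^sub>m Suc k *\<^sub>v (P *\<^sub>v v))"
    using pow_mat_Suc_left[OF S] assoc_mult_mat_vec[OF S Sk, of "P *\<^sub>v v"] v Pc by simp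
  finally show ?case .
qed

lemma walk_carrier: "walk_matrix n S \<in> carrier_mat n n"
  unfolding walk_matrix_def by simp

lemma walk_col:
  assumes S: "S \<in> carrier_mat n n" and k: "k < n"
  shows "col (walk_matrix n S) k = S ^\<^sub>m k *\<^sub>v vec n (\<lambda>_. 1)"
  using S k unfolding walk_matrix_def by (auto intro!: eq_vecI)

lemma PW_col:
  fixes S P :: "int mat"
  assumes S: "S \<in> carrier_mat n n" and perm: "\<sigma> permutes {..<n}" and P: "P = perm_mat n \<sigma>"
    and ac: "S * P = - (P * S)" and k: "k < n"
  shows "P *\<^sub>v col (walk_matrix n S) k = (-1) ^ k \<cdot>\<^sub>v col (walk_matrix n S) k"
proof -
  have Pc: "P \<in> carrier_mat n n" using P by simp
  show ?thesis unfolding walk_col[OF S k]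
    using pow_anti[OF S Pc ac, of "vec n (\<lambda>_. 1)" k] perm_mat_ones[OF perm] P by simp
qed

lemma involution:
  fixes S P :: "int mat"
  assumes S: "S \<in> carrier_mat n n" and perm: "\<sigma> permutes {..<n}" and P: "P = perm_mat n \<sigma>"
    and ac: "S * P = - (P * S)" and d: "det (walk_matrix n S) \<noteq> 0"
  shows "\<And>j. j < n \<Longrightarrow> \<sigma> (\<sigma> j) = j"
proof -
  define W where "W = walk_matrix n S"
  have Pc: "P \<in> carrier_mat n n" using P by simp
  have Wc: "W \<in> carrier_mat n n" unfolding W_def by (rule walk_carrier)
  have XW: "(P * P) * W = W"
  proof (rule mat_col_eqI)
    fix k assume "k < dim_col W"
    then have k: "k < n" using Wc by simp
    have cw: "col W k \<in> carrier_vec n" using Wc k by simp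
    have "col ((P * P) * W) k = (P * P) *\<^sub>v col W k" using col_mult2[OF mult_carrier_mat[OF Pc Pc] Wc k] .
    also have "\<dots> = P *\<^sub>v (P *\<^sub>v col W k)" using assoc_mult_mat_vec[OF Pc Pc cw] .
    also have "\<dots> = P *\<^sub>v ((-1) ^ k \<cdot>\<^sub>v col W k)" unfolding W_def using PW_col[OF S perm P ac k] by simp
    also have "\<dots> = (-1) ^ k \<cdot>\<^sub>v (P *\<^sub>v col W k)" using mult_mat_vec_smult_ring[OF Pc cw] .
    also have "\<dots> = ((-1) ^ k * (-1) ^ k) \<cdot>\<^sub>v col W k" unfolding W_def using PW_col[OF S perm P ac k]
      by (simp add: smult_smult_assoc)
    also have "\<dots> = col W k" by (simp add: power_mult_distrib[symmetric])
    finally show "col ((P * P) * W) k = col W k" .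
  qed (use Pc Wc in auto)
  define X where "X = P * P"
  have Xc: "X \<in> carrier_mat n n" unfolding X_def using Pc by simp
  have "X * (W * adj_mat W) = W * adj_mat W"
    using XW adj_mat(1)[OF Wc] Xc Wc unfolding X_def by (metis assoc_mult_mat)
  then have "X * (det W \<cdot>\<^sub>m 1\<^sub>m n) = det W \<cdot>\<^sub>m 1\<^sub>m n" using adj_mat(2)[OF Wc] by simp
  then have eq: "det W \<cdot>\<^sub>m X = det W \<cdot>\<^sub>m 1\<^sub>m n" using mult_smult_distrib[OF Xc, of "1\<^sub>m n" n] Xc by simp
  have X1: "X = 1\<^sub>m n"
  proof (rule eq_matI)
    fix i j assume ij: "i < dim_row (1\<^sub>m n :: int mat)" "j < dim_col (1\<^sub>m n :: int mat)"
    have "det W * X $$ (i, j) = det W * (1\<^sub>m n :: int mat) $$ (i, j)"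
      using arg_cong[OF eq, of "\<lambda>M. M $$ (i, j)"] ij Xc by simp
    then show "X $$ (i, j) = (1\<^sub>m n :: int mat) $$ (i, j)" using d unfolding W_def by simp
  qed (use Xc in auto)
  fix j assume j: "j < n"
  have b: "\<And>j. j < n \<Longrightarrow> \<sigma> j < n" using permutes_in_image[OF perm] by auto
  have "perm_mat n (\<sigma> \<circ> \<sigma>) = 1\<^sub>m n" using X1 perm_mat_mult[where a=\<sigma> and b=\<sigma>, OF b] P unfolding X_def by simp
  then have "perm_mat n (\<sigma> \<circ> \<sigma>) $$ (\<sigma> (\<sigma> j), j) = (1\<^sub>m n :: int mat) $$ (\<sigma> (\<sigma> j), j)" by simp
  then show "\<sigma> (\<sigma> j) = j" using j b unfolding perm_mat_def by (auto split: if_splits)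
qed



context vec_space begin
lemma rank_le_card_span:
  assumes A: "A \<in> carrier_mat n nc" and T: "T \<subseteq> carrier_vec n" "finite T"
    and sub: "set (cols A) \<subseteq> span T"
  shows "rank A \<le> card T"
proof -
  define W where "W = span T"
  have sW: "VectorSpace.subspace class_ring W V" unfolding W_def using span_is_subspace[OF T(1)] .
  have C: "set (cols A) \<subseteq> carrier_vec n" using A cols_dim by blast
  have "span (set (cols A)) \<subseteq> W" unfolding W_def using span_subsetI[OF T(1) sub] .
  moreover have "VectorSpace.subspace class_ring (span (set (cols A))) V" using span_is_subspace[OF C] .
  ultimately have sub2: "VectorSpace.subspace class_ring (span (set (cols A))) (vs W)"
    using nested_subspaces sW by blast
  have fd: "vectorspace.fin_dim class_ring (vs W)" unfolding W_def using fin_dim_span T by auto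
  have "vectorspace.fin_dim class_ring (span_vs (set (cols A)))" using A fin_dim_span_cols by blast
  then have "rank A \<le> vectorspace.dim class_ring (vs W)" unfolding rank_def
    using vectorspace.subspace_dim[OF subspace_is_vs[OF sW] sub2 fd] by auto
  also have "\<dots> \<le> card T"
  proof -
    obtain U where U: "maximal U (\<lambda>X. X \<subseteq> T \<and> lin_indpt X)" "{} \<subseteq> U" "finite U"
      using maximal_exists_superset[of T "(\<lambda>X. X \<subseteq> T \<and> lin_indpt X)" "{}"] T
      by (auto simp add: finite_lin_indpt2)
    have "vectorspace.dim class_ring (vs W) = card U" unfolding W_def
      using dim_span[OF T U(1)] by simp
    moreover have "U \<subseteq> T" using U(1) unfolding maximal_def by blast
    ultimately show ?thesis using T(2) card_mono by metis
  qed
  finally show ?thesis .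
qed

lemma rank_perm_bounds:
  fixes \<sigma> :: "nat \<Rightarrow> nat"
  assumes perm: "\<sigma> permutes {..<n}" and inv: "\<And>j. j < n \<Longrightarrow> \<sigma> (\<sigma> j) = j"
  shows "rank (map_mat (of_int :: int \<Rightarrow> 'a) (1\<^sub>m n - perm_mat n \<sigma>)) \<le> card {j. j < n \<and> j < \<sigma> j}"
    and "rank (map_mat (of_int :: int \<Rightarrow> 'a) (1\<^sub>m n + perm_mat n \<sigma>)) \<le> card ({j. j < n \<and> j < \<sigma> j} \<union> {j. j < n \<and> \<sigma> j = j})"
proof -
  define N where "N = {j. j < n \<and> j < \<sigma> j}"
  define F where "F = {j. j < n \<and> \<sigma> j = j}"
  define Am where "Am = map_mat (of_int :: int \<Rightarrow> 'a) (1\<^sub>m n - perm_mat n \<sigma>)"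
  define Ap where "Ap = map_mat (of_int :: int \<Rightarrow> 'a) (1\<^sub>m n + perm_mat n \<sigma>)"
  have sl: "\<And>j. j < n \<Longrightarrow> \<sigma> j < n" using permutes_in_image[OF perm] by auto
  have Am: "Am \<in> carrier_mat n n" and Ap: "Ap \<in> carrier_mat n n"
    unfolding Am_def Ap_def perm_mat_def by auto
  have cm: "col Am j = vec n (\<lambda>i. (if i = j then 1 else 0) - (if i = \<sigma> j then 1 else 0))" if "j < n" for j
    using that unfolding Am_def perm_mat_def by (auto intro!: eq_vecI)
  have cp: "col Ap j = vec n (\<lambda>i. (if i = j then 1 else 0) + (if i = \<sigma> j then 1 else 0))" if "j < n" for j
    using that unfolding Ap_def perm_mat_def by (auto intro!: eq_vecI)
  have cols_m: "x \<in> set (cols Am) \<Longrightarrow> \<exists>j<n. x = col Am j" for x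
    using Am by (metis carrier_matD(2) cols_length cols_nth in_set_conv_nth)
  have cols_p: "x \<in> set (cols Ap) \<Longrightarrow> \<exists>j<n. x = col Ap j" for x
    using Ap by (metis carrier_matD(2) cols_length cols_nth in_set_conv_nth)
  have cdm: "col Am j \<in> carrier_vec n" for j using Am by auto
  have cdp: "col Ap j \<in> carrier_vec n" for j using Ap by auto
  show "rank Am \<le> card N"
  proof -
    have T: "col Am ` N \<subseteq> carrier_vec n" "finite (col Am ` N)" using cdm unfolding N_def by auto
    have "set (cols Am) \<subseteq> span (col Am ` N)"
    proof
      fix x assume "x \<in> set (cols Am)"
      then obtain j where j: "j < n" "x = col Am j" using cols_m by blast
      consider "\<sigma> j = j" | "j < \<sigma> j" | "\<sigma> j < j" by linarith
      then show "x \<in> span (col Am ` N)"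
      proof cases
        case 1
        then have "x = 0 \<cdot>\<^sub>v col Am j" using j cm by (auto intro!: eq_vecI)
        then show ?thesis using prod_in_span[OF cdm T(1)] by simp
      next
        case 2
        then have "x \<in> col Am ` N" using j unfolding N_def by auto
        then show ?thesis using T in_own_span by blast
      next
        case 3
        have sN: "\<sigma> j \<in> N" using 3 inv j sl unfolding N_def by auto
        have "x = (-1) \<cdot>\<^sub>v col Am (\<sigma> j)" using j cm[OF j(1)] cm[OF sl[OF j(1)]] inv[OF j(1)]
          by (auto intro!: eq_vecI)
        moreover have "col Am (\<sigma> j) \<in> span (col Am ` N)" using sN T in_own_span by blast
        ultimately show ?thesis using smult_in_span T by auto
      qed
    qed
    then show ?thesis using rank_le_card_span[OF Am T] card_image_le[of N "col Am"]
      unfolding N_def by auto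
  qed
  show "rank Ap \<le> card (N \<union> F)"
  proof -
    have T: "col Ap ` (N \<union> F) \<subseteq> carrier_vec n" "finite (col Ap ` (N \<union> F))" using cdp unfolding N_def F_def by auto
    have "set (cols Ap) \<subseteq> span (col Ap ` (N \<union> F))"
    proof
      fix x assume "x \<in> set (cols Ap)"
      then obtain j where j: "j < n" "x = col Ap j" using cols_p by blast
      consider "\<sigma> j = j \<or> j < \<sigma> j" | "\<sigma> j < j" by linarith
      then show "x \<in> span (col Ap ` (N \<union> F))"
      proof cases
        case 1
        then have "x \<in> col Ap ` (N \<union> F)" using j unfolding N_def F_def by auto
        then show ?thesis using T in_own_span by blast
      next
        case 3: 2
        have sN: "\<sigma> j \<in> N \<union> F" using 3 inv j sl unfolding N_def by auto
        have "x = col Ap (\<sigma> j)" using j cp[OF j(1)] cp[OF sl[OF j(1)]] inv[OF j(1)]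
          by (auto intro!: eq_vecI)
        then show ?thesis using sN T in_own_span by blast
      qed
    qed
    then show ?thesis using rank_le_card_span[OF Ap T] card_image_le[of "N \<union> F" "col Ap"]
      unfolding N_def F_def by auto
  qed
qed

lemma rank_sum_ge:
  fixes P :: "int mat"
  assumes P: "P \<in> carrier_mat n n" and two: "(2::'a) \<noteq> 0"
  shows "n \<le> rank (map_mat (of_int :: int \<Rightarrow> 'a) (1\<^sub>m n - P)) + rank (map_mat (of_int :: int \<Rightarrow> 'a) (1\<^sub>m n + P))"
proof -
  define Am where "Am = map_mat (of_int :: int \<Rightarrow> 'a) (1\<^sub>m n - P)"
  define Ap where "Ap = map_mat (of_int :: int \<Rightarrow> 'a) (1\<^sub>m n + P)"
  have Am: "Am \<in> carrier_mat n n" and Ap: "Ap \<in> carrier_mat n n"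
    unfolding Am_def Ap_def using P by auto
  have sum: "Am + Ap = 2 \<cdot>\<^sub>m 1\<^sub>m n" unfolding Am_def Ap_def using P
    by (auto intro!: eq_matI simp: of_int_diff of_int_add)
  have "det (Am + Ap) \<noteq> 0" unfolding sum using two by simp
  then have "rank (Am + Ap) = n" using det_rank_iff[of "Am + Ap"] Am Ap by auto
  then show ?thesis using rank_subadditive[OF Am Ap] unfolding Am_def Ap_def by simp
qed

lemma mult_in_span_cols:
  assumes B: "B \<in> carrier_mat n nc" and v: "v \<in> carrier_vec nc"
  shows "B *\<^sub>v v \<in> span (set (cols B))"
proof -
  have cs: "set (cols B) \<subseteq> carrier_vec n" using B cols_dim by blast
  have "lincomb_list (\<lambda>i. v $ i) (cols B) = mat_of_cols n (cols B) *\<^sub>v vec (length (cols B)) (\<lambda>i. v $ i)"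
    using cs by (intro lincomb_list_as_mat_mult) auto
  also have "\<dots> = B *\<^sub>v v"
  proof -
    have "vec (length (cols B)) (\<lambda>i. v $ i) = v" using B v by auto
    then show ?thesis using B mat_of_cols_cols[of B] by simp
  qed
  finally have "B *\<^sub>v v = lincomb_list (\<lambda>i. v $ i) (cols B)" by simp
  then have "B *\<^sub>v v \<in> span_list (cols B)" by (intro in_span_listI) auto
  then show ?thesis using span_list_as_span[OF cs] by simp
qed

lemma rank_le_inv:
  assumes A: "A \<in> carrier_mat n n" and W: "W \<in> carrier_mat n n" and d: "det W \<noteq> 0"
    and z: "\<And>k. k < n \<Longrightarrow> \<not> Q k \<Longrightarrow> col (A * W) k = 0\<^sub>v n"
  shows "rank A \<le> card {k. k < n \<and> Q k}"
proof -
  define B where "B = A * W"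
  have Bc: "B \<in> carrier_mat n n" unfolding B_def using A W by simp
  define Wi where "Wi = inverse (det W) \<cdot>\<^sub>m adj_mat W"
  have Wic: "Wi \<in> carrier_mat n n" unfolding Wi_def using adj_mat(1)[OF W] by simp
  have "W * Wi = inverse (det W) \<cdot>\<^sub>m (W * adj_mat W)" unfolding Wi_def
    using mult_smult_distrib[OF W adj_mat(1)[OF W]] .
  also have "\<dots> = 1\<^sub>m n" unfolding adj_mat(2)[OF W] using d by (auto intro!: eq_matI)
  finally have WWi: "W * Wi = 1\<^sub>m n" .
  have AB: "A = B * Wi" unfolding B_def using assoc_mult_mat[OF A W Wic] WWi A by simp
  define T where "T = col B ` {k. k < n \<and> Q k}"
  have T: "T \<subseteq> carrier_vec n" "finite T" unfolding T_def using Bc by auto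
  have "set (cols B) \<subseteq> span T"
  proof
    fix x assume "x \<in> set (cols B)"
    then obtain k where k: "k < n" "x = col B k" using Bc by (metis carrier_matD(2) cols_length cols_nth in_set_conv_nth)
    show "x \<in> span T"
    proof (cases "Q k")
      case True
      then have "x \<in> T" unfolding T_def using k by auto
      then show ?thesis using T in_own_span by blast
    next
      case False
      then have "x = 0 \<cdot>\<^sub>v col B k" using z[OF k(1)] k unfolding B_def by (auto intro!: eq_vecI)
      moreover have "0 \<cdot>\<^sub>v col B k \<in> span T" by (rule prod_in_span) (use Bc T in auto)
      ultimately show ?thesis by simp
    qed
  qed
  then have sp: "span (set (cols B)) \<subseteq> span T" using span_subsetI[OF T(1)] by simp
  have "set (cols A) \<subseteq> span T"
  proof
    fix x assume "x \<in> set (cols A)"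
    then obtain j where j: "j < n" "x = col A j" using A by (metis carrier_matD(2) cols_length cols_nth in_set_conv_nth)
    have "x = B *\<^sub>v col Wi j" using j AB col_mult2[OF Bc Wic j(1)] by simp
    then show "x \<in> span T" using mult_in_span_cols[OF Bc, of "col Wi j"] Wic j sp by auto
  qed
  then have "rank A \<le> card T" using rank_le_card_span[OF A T] by simp
  also have "\<dots> \<le> card {k. k < n \<and> Q k}" unfolding T_def by (rule card_image_le) simp
  finally show ?thesis .
qed
end


lemma card_parity:
  "card {k. k < n \<and> odd k} = n div 2 \<and> card {k. k < n \<and> \<not> odd k} = (n + 1) div 2"
proof (induction n)
  case 0 then show ?case by simp
next
  case (Suc n)
  show ?case
  proof (cases "odd n")
    case True
    have "{k. k < Suc n \<and> odd k} = insert n {k. k < n \<and> odd k}"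
         "{k. k < Suc n \<and> \<not> odd k} = {k. k < n \<and> \<not> odd k}" using True by (auto simp: less_Suc_eq)
    then show ?thesis using Suc True by (simp; presburger)
  next
    case False
    have "{k. k < Suc n \<and> \<not> odd k} = insert n {k. k < n \<and> \<not> odd k}"
         "{k. k < Suc n \<and> odd k} = {k. k < n \<and> odd k}" using False by (auto simp: less_Suc_eq)
    then show ?thesis using Suc False by (simp; presburger)
  qed
qed

lemma card_inv_count:
  assumes perm: "\<sigma> permutes {..<n}" and inv: "\<And>j. j < n \<Longrightarrow> \<sigma> (\<sigma> j) = j"
  shows "2 * card {j. j < n \<and> j < \<sigma> j} + card {j. j < n \<and> \<sigma> j = j} = n"
proof -
  define N where "N = {j. j < n \<and> j < \<sigma> j}"
  define M where "M = {j. j < n \<and> \<sigma> j < j}"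
  define F where "F = {j. j < n \<and> \<sigma> j = j}"
  have b: "\<And>j. j < n \<Longrightarrow> \<sigma> j < n" using permutes_in_image[OF perm] by auto
  have img: "\<sigma> ` N = M"
  proof
    show "\<sigma> ` N \<subseteq> M" unfolding N_def M_def using b inv by auto
    show "M \<subseteq> \<sigma> ` N"
    proof
      fix j assume "j \<in> M"
      then have "\<sigma> j \<in> N" "j = \<sigma> (\<sigma> j)" unfolding M_def N_def using b inv by auto
      then show "j \<in> \<sigma> ` N" by blast
    qed
  qed
  have "inj_on \<sigma> N" using permutes_inj[OF perm] by (simp add: inj_on_def inj_def)
  then have cM: "card M = card N" using img card_image by blast
  have U: "{..<n} = N \<union> M \<union> F" unfolding N_def M_def F_def by auto
  have "n = card (N \<union> M \<union> F)" using U by (metis card_lessThan)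
  also have "\<dots> = card N + card M + card F"
  proof -
    have "card (N \<union> M \<union> F) = card (N \<union> M) + card F"
      by (rule card_Un_disjoint) (auto simp: N_def M_def F_def)
    moreover have "card (N \<union> M) = card N + card M"
      by (rule card_Un_disjoint) (auto simp: N_def M_def)
    ultimately show ?thesis by simp
  qed
  finally show ?thesis using cM unfolding N_def F_def by simp
qed

lemma field_bounds:
  fixes \<sigma> :: "nat \<Rightarrow> nat"
  assumes perm: "\<sigma> permutes {..<n}" and inv: "\<And>j. j < n \<Longrightarrow> \<sigma> (\<sigma> j) = j"
    and two: "(2 :: 'a :: field) \<noteq> 0"
  shows "mat_rank (map_mat (of_int :: int \<Rightarrow> 'a) (1\<^sub>m n - perm_mat n \<sigma>)) \<le> card {j. j < n \<and> j < \<sigma> j}"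
    and "mat_rank (map_mat (of_int :: int \<Rightarrow> 'a) (1\<^sub>m n + perm_mat n \<sigma>)) \<le> card {j. j < n \<and> j < \<sigma> j} + card {j. j < n \<and> \<sigma> j = j}"
    and "n \<le> mat_rank (map_mat (of_int :: int \<Rightarrow> 'a) (1\<^sub>m n - perm_mat n \<sigma>)) + mat_rank (map_mat (of_int :: int \<Rightarrow> 'a) (1\<^sub>m n + perm_mat n \<sigma>))"
proof -
  have d1: "dim_row (map_mat (of_int :: int \<Rightarrow> 'a) (1\<^sub>m n - perm_mat n \<sigma>)) = n" by simp
  have d2: "dim_row (map_mat (of_int :: int \<Rightarrow> 'a) (1\<^sub>m n + perm_mat n \<sigma>)) = n" by simp
  show "mat_rank (map_mat (of_int :: int \<Rightarrow> 'a) (1\<^sub>m n - perm_mat n \<sigma>)) \<le> card {j. j < n \<and> j < \<sigma> j}"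
    unfolding mat_rank_def d1 using vec_space.rank_perm_bounds(1)[OF perm inv, where 'a='a] by blast
  have "card ({j. j < n \<and> j < \<sigma> j} \<union> {j. j < n \<and> \<sigma> j = j}) = card {j. j < n \<and> j < \<sigma> j} + card {j. j < n \<and> \<sigma> j = j}"
    by (rule card_Un_disjoint) auto
  then show "mat_rank (map_mat (of_int :: int \<Rightarrow> 'a) (1\<^sub>m n + perm_mat n \<sigma>)) \<le> card {j. j < n \<and> j < \<sigma> j} + card {j. j < n \<and> \<sigma> j = j}"
    unfolding mat_rank_def d2 using vec_space.rank_perm_bounds(2)[OF perm inv, where 'a='a] by simp
  show "n \<le> mat_rank (map_mat (of_int :: int \<Rightarrow> 'a) (1\<^sub>m n - perm_mat n \<sigma>)) + mat_rank (map_mat (of_int :: int \<Rightarrow> 'a) (1\<^sub>m n + perm_mat n \<sigma>))"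
    unfolding mat_rank_def d1 d2 using vec_space.rank_sum_ge[OF perm_mat_carrier two] by blast
qed

lemma rat_bounds:
  fixes S P :: "int mat"
  assumes S: "S \<in> carrier_mat n n" and perm: "\<sigma> permutes {..<n}" and P: "P = perm_mat n \<sigma>"
    and ac: "S * P = - (P * S)" and d: "det (walk_matrix n S) \<noteq> 0"
  shows "mat_rank (map_mat rat_of_int (1\<^sub>m n - P)) \<le> n div 2"
    and "mat_rank (map_mat rat_of_int (1\<^sub>m n + P)) \<le> (n + 1) div 2"
proof -
  define W where "W = walk_matrix n S"
  have Pc: "P \<in> carrier_mat n n" using P by simp
  have Wc: "W \<in> carrier_mat n n" unfolding W_def by (rule walk_carrier)
  have dq: "det (map_mat rat_of_int W) \<noteq> 0" using d unfolding W_def by simp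
  have Wqc: "map_mat rat_of_int W \<in> carrier_mat n n" using Wc by simp
  have cw: "\<And>k. k < n \<Longrightarrow> col W k \<in> carrier_vec n" using Wc by simp
  have pw: "\<And>k. k < n \<Longrightarrow> P *\<^sub>v col W k = (-1) ^ k \<cdot>\<^sub>v col W k"
    unfolding W_def using PW_col[OF S perm P ac] by blast
  have one: "\<And>k. k < n \<Longrightarrow> 1\<^sub>m n *\<^sub>v col W k = col W k" using cw by simp
  have zm: "col (map_mat rat_of_int (1\<^sub>m n - P) * map_mat rat_of_int W) k = 0\<^sub>v n"
    if k: "k < n" and ev: "\<not> odd k" for k
  proof -
    have "map_mat rat_of_int (1\<^sub>m n - P) * map_mat rat_of_int W = map_mat rat_of_int ((1\<^sub>m n - P) * W)"
    proof -
      have c: "1\<^sub>m n - P \<in> carrier_mat n n" using minus_carrier_mat[OF Pc] .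
      show ?thesis by (rule sym[OF of_int_hom.mat_hom_mult[OF c Wc]])
    qed
    moreover have "col ((1\<^sub>m n - P) * W) k = 0\<^sub>v n"
    proof -
      have "col ((1\<^sub>m n - P) * W) k = (1\<^sub>m n - P) *\<^sub>v col W k" using col_mult2[OF minus_carrier_mat[OF Pc] Wc k] .
      also have "\<dots> = 1\<^sub>m n *\<^sub>v col W k - P *\<^sub>v col W k"
        using minus_mult_distrib_mat_vec[OF one_carrier_mat Pc cw[OF k]] .
      also have "\<dots> = 0\<^sub>v n" using one[OF k] pw[OF k] ev cw[OF k] Wc by (auto intro!: eq_vecI)
      finally show ?thesis .
    qed
    ultimately show ?thesis using Pc Wc k by simp
  qed
  have zp: "col (map_mat rat_of_int (1\<^sub>m n + P) * map_mat rat_of_int W) k = 0\<^sub>v n"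
    if k: "k < n" and ev: "\<not> \<not> odd k" for k
  proof -
    have "map_mat rat_of_int (1\<^sub>m n + P) * map_mat rat_of_int W = map_mat rat_of_int ((1\<^sub>m n + P) * W)"
    proof -
      have c: "1\<^sub>m n + P \<in> carrier_mat n n" using add_carrier_mat[OF Pc] .
      show ?thesis by (rule sym[OF of_int_hom.mat_hom_mult[OF c Wc]])
    qed
    moreover have "col ((1\<^sub>m n + P) * W) k = 0\<^sub>v n"
    proof -
      have "col ((1\<^sub>m n + P) * W) k = (1\<^sub>m n + P) *\<^sub>v col W k" using col_mult2[OF add_carrier_mat[OF Pc] Wc k] .
      also have "\<dots> = 1\<^sub>m n *\<^sub>v col W k + P *\<^sub>v col W k"
        using add_mult_distrib_mat_vec[OF one_carrier_mat Pc cw[OF k]] .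
      also have "\<dots> = 0\<^sub>v n" using one[OF k] pw[OF k] ev cw[OF k] Wc by (auto intro!: eq_vecI)
      finally show ?thesis .
    qed
    ultimately show ?thesis using Pc Wc k by simp
  qed
  have cp: "card {k. k < n \<and> odd k} = n div 2" "card {k. k < n \<and> \<not> odd k} = (n + 1) div 2"
    using card_parity by auto
  have m1: "map_mat rat_of_int (1\<^sub>m n - P) \<in> carrier_mat n n" using minus_carrier_mat[OF Pc] by simp
  have m2: "map_mat rat_of_int (1\<^sub>m n + P) \<in> carrier_mat n n" using Pc by simp
  show "mat_rank (map_mat rat_of_int (1\<^sub>m n - P)) \<le> n div 2"
    unfolding mat_rank_def using vec_space.rank_le_inv[OF m1 Wqc dq, of odd] zm cp Pc by simp
  show "mat_rank (map_mat rat_of_int (1\<^sub>m n + P)) \<le> (n + 1) div 2"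
    unfolding mat_rank_def using vec_space.rank_le_inv[OF m2 Wqc dq, of "\<lambda>k. \<not> odd k"] zp cp Pc by simp
qed

theorem lemma2p11:
  fixes n :: nat and E :: "nat \<Rightarrow> nat \<Rightarrow> bool" and P :: "int mat"
  defines "S \<equiv> skew_adj n E"
  assumes "oriented_graph n E"
    and "det (walk_matrix n S) \<noteq> 0"
    and "is_perm_mat n P"
    and "transpose_mat P * S * P = transpose_mat S"
    and "transpose_mat S = - S"
  shows "(even n \<longrightarrow>
            mat_rank (map_mat rat_of_int (1\<^sub>m n - P)) = n div 2 \<and>
            mat_rank (map_mat rat_of_int (1\<^sub>m n + P)) = n div 2) \<and>
         (odd n \<longrightarrow>
            mat_rank (map_mat rat_of_int (1\<^sub>m n - P)) = (n - 1) div 2 \<and>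
            mat_rank (map_mat rat_of_int (1\<^sub>m n + P)) = (n + 1) div 2) \<and>
         (odd CARD('p::prime_card) \<longrightarrow>
           (even n \<longrightarrow>
              mat_rank (map_mat (of_int :: int \<Rightarrow> 'p mod_ring) (1\<^sub>m n - P)) = n div 2 \<and>
              mat_rank (map_mat (of_int :: int \<Rightarrow> 'p mod_ring) (1\<^sub>m n + P)) = n div 2) \<and>
           (odd n \<longrightarrow>
              mat_rank (map_mat (of_int :: int \<Rightarrow> 'p mod_ring) (1\<^sub>m n - P)) = (n - 1) div 2 \<and>
              mat_rank (map_mat (of_int :: int \<Rightarrow> 'p mod_ring) (1\<^sub>m n + P)) = (n + 1) div 2))"
proof -
  obtain \<sigma> where perm: "\<sigma> permutes {..<n}" and P: "P = perm_mat n \<sigma>"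
    using assms(4) unfolding is_perm_mat_def by blast
  have Sc: "S \<in> carrier_mat n n" unfolding S_def skew_adj_def by simp
  have ac: "S * P = - (P * S)" using anti_comm[OF Sc perm P assms(5) assms(6)] .
  have inv: "\<And>j. j < n \<Longrightarrow> \<sigma> (\<sigma> j) = j" using involution[OF Sc perm P ac assms(3)] .
  define a where "a = card {j. j < n \<and> j < \<sigma> j}"
  define b where "b = card {j. j < n \<and> \<sigma> j = j}"
  have cnt: "2 * a + b = n" unfolding a_def b_def using card_inv_count[OF perm inv] .
  have q: "mat_rank (map_mat rat_of_int (1\<^sub>m n - P)) \<le> a"
    "mat_rank (map_mat rat_of_int (1\<^sub>m n + P)) \<le> a + b"
    "n \<le> mat_rank (map_mat rat_of_int (1\<^sub>m n - P)) + mat_rank (map_mat rat_of_int (1\<^sub>m n + P))"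
    using field_bounds[OF perm inv, where 'a=rat] unfolding P a_def b_def by auto
  have r: "mat_rank (map_mat rat_of_int (1\<^sub>m n - P)) \<le> n div 2"
    "mat_rank (map_mat rat_of_int (1\<^sub>m n + P)) \<le> (n + 1) div 2"
    using rat_bounds[OF Sc perm P ac assms(3)] by auto
  have ab: "a = n div 2" "a + b = (n + 1) div 2" using q r cnt by linarith+
  have Q: "mat_rank (map_mat rat_of_int (1\<^sub>m n - P)) = n div 2"
    "mat_rank (map_mat rat_of_int (1\<^sub>m n + P)) = (n + 1) div 2" using q r cnt by linarith+
  have Fp: "mat_rank (map_mat (of_int :: int \<Rightarrow> 'p mod_ring) (1\<^sub>m n - P)) = n div 2 \<and>
            mat_rank (map_mat (of_int :: int \<Rightarrow> 'p mod_ring) (1\<^sub>m n + P)) = (n + 1) div 2"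
    if odd: "odd CARD('p::prime_card)"
  proof -
    have "(2 :: 'p mod_ring) \<noteq> 0"
    proof
      assume "(2 :: 'p mod_ring) = 0"
      then have "(of_nat 2 :: 'p mod_ring) = 0" by simp
      then have "CARD('p) dvd 2" unfolding of_nat_eq_0_iff_char_dvd by simp
      then have "CARD('p) \<le> 2" by (simp add: dvd_imp_le)
      moreover have "CARD('p) > 1" using nontriv by blast
      ultimately show False using odd by (simp add: numeral_2_eq_2 le_Suc_eq) 
    qed
    then have f: "mat_rank (map_mat (of_int :: int \<Rightarrow> 'p mod_ring) (1\<^sub>m n - P)) \<le> a"
      "mat_rank (map_mat (of_int :: int \<Rightarrow> 'p mod_ring) (1\<^sub>m n + P)) \<le> a + b"
      "n \<le> mat_rank (map_mat (of_int :: int \<Rightarrow> 'p mod_ring) (1\<^sub>m n - P)) + mat_rank (map_mat (of_int :: int \<Rightarrow> 'p mod_ring) (1\<^sub>m n + P))"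
      using field_bounds[OF perm inv, where 'a="'p mod_ring"] unfolding P a_def b_def by auto
    then show ?thesis using ab cnt by linarith
  qed
  have e1: "even n \<Longrightarrow> (n + 1) div 2 = n div 2" by presburger
  have e2: "odd n \<Longrightarrow> (n - 1) div 2 = n div 2" by presburger
  show ?thesis using Q Fp e1 e2 by auto
qed

end
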